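(* Let $L\subset S^3$ be an oriented link, with $\mathcal{B}_L$, $\sim$ and the operations on $\mathcal{B}_L$ as in the context. If $(a_0,a_1)\sim(c_0,c_1)$ and $(b_0,b_1)\sim(d_0,d_1)$ in $\mathcal{B}_L$, then $(a_0,a_1)^{(b_0,b_1)}\sim(c_0,c_1)^{(d_0,d_1)}$ and $(a_0,a_1)_{(b_0,b_1)}\sim(c_0,c_1)_{(d_0,d_1)}$. Consequently these operations induce well-defined binary operations on $\mathcal{B}_L/\!\sim$.
   Context: An oriented link $L$ is an oriented subspace of $S^3$ homeomorphic to a finite disjoint union of circles. Let $N_L$ be a regular neighborhood of $L$ and $E_L$ the closure of $S^3\setminus N_L$; the orientation of $L$ induces an orientation of its normal bundle by the right-hand rule. Choose a 3-ball $B^3\subset S^3$ with $N_L\subset B^3$ and let $z_0,z_1$ be two antipodal points of $\partial B^3$. For a path $a$, $\overline{a}(t)=a(1-t)$; $a\cdot b$ denotes concatenation of paths. Let $\mathcal{B}_L$ be the set of pairs $(a_0,a_1)$ where $a_i\colon[0,1]\to E_L$ is a path from a point of $\partial N_L$ to $z_i$ ($i=0,1$) and $a_0(0)=a_1(0)$. Define $(a_0,a_1)\sim(b_0,b_1)$ if there is a homotopy $H_t\colon[0,1]\to E_L$, $t\in[0,1]$, with $H_0=\overline{a_0}\cdot a_1$, $H_1=\overline{b_0}\cdot b_1$, $H_t(0)=z_0$, $H_t(1)=z_1$ and $H_t(\tfrac12)\in\partial N_L$ for all $t$. For $p\in\partial N_L$, $m_p$ is the loop in $\partial N_L$ based at $p$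 going once around the meridian of the corresponding component of $L$ positively with respect to the normal orientation. Define operations on $\mathcal{B}_L$ by $(a_0,a_1)^{(b_0,b_1)}=(a_0\cdot\overline{b_0}\cdot m_{b_0(0)}\cdot b_0,\ a_1)$ and $(a_0,a_1)_{(b_0,b_1)}=(a_0,\ a_1\cdot\overline{b_1}\cdot m_{b_1(0)}\cdot b_1)$. *)

theory Defs
  imports "HOL-Analysis.Analysis"
begin

definition S3 :: "(complex \<times> complex) set" where
  "S3 = sphere 0 1"

definition solid_torus :: "(complex \<times> complex) set" where
  "solid_torus = {(z, w). cmod z \<le> 1 \<and> cmod w = 1}"

definition torus_bdry :: "(complex \<times> complex) set" where
  "torus_bdry = {(z, w). cmod z = 1 \<and> cmod w = 1}"

definition core_circle :: "(complex \<times> complex) set" where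
  "core_circle = {(z, w). z = 0 \<and> cmod w = 1}"

text \<open>An oriented link L with n components together with a regular (tubular)
  neighbourhood, given by embeddings phi k of the solid torus into S^3 with
  pairwise disjoint images; component k of L is the image of the core circle,
  oriented by w \<mapsto> phi k (0, w) with w running counterclockwise.\<close>
definition oriented_link_nbhd ::
  "(complex \<times> complex) set \<Rightarrow> nat \<Rightarrow> (nat \<Rightarrow> complex \<times> complex \<Rightarrow> complex \<times> complex) \<Rightarrow> bool" where
  "oriented_link_nbhd L n \<phi> \<longleftrightarrow>
     L \<subseteq> S3 \<and>
     (\<forall>k<n. continuous_on solid_torus (\<phi> k) \<and> inj_on (\<phi> k) solid_torus \<and> \<phi> k ` solid_torus \<subseteq> S3) \<and>
     (\<forall>k<n. \<forall>j<n. k \<noteq> j \<longrightarrow> \<phi> k ` solid_torus \<inter> \<phi> j ` solid_torus = {}) \<and>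
     L = (\<Union>k<n. \<phi> k ` core_circle)"

definition nbhd :: "nat \<Rightarrow> (nat \<Rightarrow> complex \<times> complex \<Rightarrow> complex \<times> complex) \<Rightarrow> (complex \<times> complex) set" where
  "nbhd n \<phi> = (\<Union>k<n. \<phi> k ` solid_torus)"

definition nbhd_bdry :: "nat \<Rightarrow> (nat \<Rightarrow> complex \<times> complex \<Rightarrow> complex \<times> complex) \<Rightarrow> (complex \<times> complex) set" where
  "nbhd_bdry n \<phi> = (\<Union>k<n. \<phi> k ` torus_bdry)"

definition link_exterior :: "nat \<Rightarrow> (nat \<Rightarrow> complex \<times> complex \<Rightarrow> complex \<times> complex) \<Rightarrow> (complex \<times> complex) set" where
  "link_exterior n \<phi> = closure (S3 - nbhd n \<phi>)"

definition meridian :: "nat \<Rightarrow> (nat \<Rightarrow> complex \<times> complex \<Rightarrow> complex \<times> complex) \<Rightarrow> complex \<times> complex \<Rightarrow> real \<Rightarrow> complex \<times> complex" where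
  "meridian n \<phi> p =
     (let (k, z, w) = (SOME (k, z, w). k < n \<and> (z, w) \<in> torus_bdry \<and> \<phi> k (z, w) = p)
      in (\<lambda>t. \<phi> k (z * cis (2 * pi * t), w)))"

definition B_L :: "nat \<Rightarrow> (nat \<Rightarrow> complex \<times> complex \<Rightarrow> complex \<times> complex) \<Rightarrow> complex \<times> complex \<Rightarrow> complex \<times> complex
    \<Rightarrow> ((real \<Rightarrow> complex \<times> complex) \<times> (real \<Rightarrow> complex \<times> complex)) set" where
  "B_L n \<phi> z0 z1 = {(a0, a1).
     path a0 \<and> path a1 \<and>
     path_image a0 \<subseteq> link_exterior n \<phi> \<and> path_image a1 \<subseteq> link_exterior n \<phi> \<and>
     pathstart a0 \<in> nbhd_bdry n \<phi> \<and> pathstart a1 = pathstart a0 \<and>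
     pathfinish a0 = z0 \<and> pathfinish a1 = z1}"

text \<open>The relation ~ ; H (t, s) is H_t(s).\<close>
definition B_equiv :: "nat \<Rightarrow> (nat \<Rightarrow> complex \<times> complex \<Rightarrow> complex \<times> complex) \<Rightarrow> complex \<times> complex \<Rightarrow> complex \<times> complex
    \<Rightarrow> (real \<Rightarrow> complex \<times> complex) \<times> (real \<Rightarrow> complex \<times> complex)
    \<Rightarrow> (real \<Rightarrow> complex \<times> complex) \<times> (real \<Rightarrow> complex \<times> complex) \<Rightarrow> bool" where
  "B_equiv n \<phi> z0 z1 a b \<longleftrightarrow>
     (\<exists>H :: real \<times> real \<Rightarrow> complex \<times> complex.
        continuous_on ({0..1} \<times> {0..1}) H \<and>
        H ` ({0..1} \<times> {0..1}) \<subseteq> link_exterior n \<phi> \<and>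
        (\<forall>s\<in>{0..1}. H (0, s) = (reversepath (fst a) +++ snd a) s) \<and>
        (\<forall>s\<in>{0..1}. H (1, s) = (reversepath (fst b) +++ snd b) s) \<and>
        (\<forall>t\<in>{0..1}. H (t, 0) = z0 \<and> H (t, 1) = z1 \<and> H (t, 1/2) \<in> nbhd_bdry n \<phi>))"

definition B_up :: "nat \<Rightarrow> (nat \<Rightarrow> complex \<times> complex \<Rightarrow> complex \<times> complex)
    \<Rightarrow> (real \<Rightarrow> complex \<times> complex) \<times> (real \<Rightarrow> complex \<times> complex)
    \<Rightarrow> (real \<Rightarrow> complex \<times> complex) \<times> (real \<Rightarrow> complex \<times> complex)
    \<Rightarrow> (real \<Rightarrow> complex \<times> complex) \<times> (real \<Rightarrow> complex \<times> complex)" where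
  "B_up n \<phi> a b =
     (fst a +++ reversepath (fst b) +++ meridian n \<phi> (pathstart (fst b)) +++ fst b, snd a)"

definition B_down :: "nat \<Rightarrow> (nat \<Rightarrow> complex \<times> complex \<Rightarrow> complex \<times> complex)
    \<Rightarrow> (real \<Rightarrow> complex \<times> complex) \<times> (real \<Rightarrow> complex \<times> complex)
    \<Rightarrow> (real \<Rightarrow> complex \<times> complex) \<times> (real \<Rightarrow> complex \<times> complex)
    \<Rightarrow> (real \<Rightarrow> complex \<times> complex) \<times> (real \<Rightarrow> complex \<times> complex)" where
  "B_down n \<phi> a b =
     (fst a, snd a +++ reversepath (snd b) +++ meridian n \<phi> (pathstart (snd b)) +++ snd b)"

end

theory Submission imports Defs begin

lemma fam_rev:
  assumes "continuous_on ({0..1}\<times>{0..1}) (\<lambda>(t,s). P t s)"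
  shows "continuous_on ({0..1}\<times>{0..1}) (\<lambda>(t::real,s). reversepath (P t) s)"
proof -
  have e: "(\<lambda>(t,s). reversepath (P t) s) = (\<lambda>x. (\<lambda>(t,s). P t s) (fst x, 1 - snd x))"
    by (auto simp: reversepath_def fun_eq_iff)
  have "continuous_on ({0..1}\<times>{0..1}) (\<lambda>x::real\<times>real. (fst x, 1 - snd x))"
    by (intro continuous_intros) 
  moreover have "(\<lambda>x::real\<times>real. (fst x, 1 - snd x)) ` ({0..1}\<times>{0..1}) \<subseteq> {0..1}\<times>{0..1}" by auto
  ultimately show ?thesis unfolding e using continuous_on_compose2[OF assms] by blast
qed

lemma fam_join:
  assumes P: "continuous_on ({0..1}\<times>{0..1}) (\<lambda>(t,s). P t s)"
    and Q: "continuous_on ({0..1}\<times>{0..1}) (\<lambda>(t,s). Q t s)"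
    and m: "\<And>t. t \<in> {0..1} \<Longrightarrow> P t 1 = Q t 0"
  shows "continuous_on ({0..1}\<times>{0..1}) (\<lambda>(t::real,s). (P t +++ Q t) s)"
proof -
  have e: "(\<lambda>(t,s). (P t +++ Q t) s) = (\<lambda>x. if snd x \<le> 1/2 then (\<lambda>(t,s). P t s) (fst x, 2 * snd x)
      else (\<lambda>(t,s). Q t s) (fst x, 2 * snd x - 1))"
    by (auto simp: joinpaths_def fun_eq_iff)
  have c1: "continuous_on {x \<in> {0..1}\<times>{0..1}. snd x \<le> 1/2} (\<lambda>x. (\<lambda>(t,s). P t s) (fst x, 2 * snd x))"
  proof (rule continuous_on_compose2[OF P])
    show "continuous_on {x \<in> {0..1}\<times>{0..1}. snd x \<le> 1/2} (\<lambda>x::real\<times>real. (fst x, 2 * snd x))"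
      by (intro continuous_intros)
    show "(\<lambda>x::real\<times>real. (fst x, 2 * snd x)) ` {x \<in> {0..1}\<times>{0..1}. snd x \<le> 1/2} \<subseteq> {0..1}\<times>{0..1}" by auto
  qed
  have c2: "continuous_on {x \<in> {0..1}\<times>{0..1}. 1/2 \<le> snd x} (\<lambda>x. (\<lambda>(t,s). Q t s) (fst x, 2 * snd x - 1))"
  proof (rule continuous_on_compose2[OF Q])
    show "continuous_on {x \<in> {0..1}\<times>{0..1}. 1/2 \<le> snd x} (\<lambda>x::real\<times>real. (fst x, 2 * snd x - 1))"
      by (intro continuous_intros)
    show "(\<lambda>x::real\<times>real. (fst x, 2 * snd x - 1)) ` {x \<in> {0..1}\<times>{0..1}. 1/2 \<le> snd x} \<subseteq> {0..1}\<times>{0..1}" by auto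
  qed
  show ?thesis unfolding e
    apply (rule continuous_on_cases_le[OF c1 c2])
     apply (auto intro!: continuous_intros)
    subgoal for a b by (subgoal_tac "2*b = 1") (auto simp: m)
    done
qed

lemma join_cong:
  assumes "\<forall>s\<in>{0..1}. P s = P' s" "\<forall>s\<in>{0..1}. Q s = Q' s"
  shows "\<forall>s\<in>{0..1}. (P +++ Q) s = (P' +++ Q') s"
  using assms by (auto simp: joinpaths_def)

lemma rev_cong:
  assumes "\<forall>s\<in>{0..1}. P s = P' s"
  shows "\<forall>s\<in>{0..1}. reversepath P s = reversepath P' s"
  using assms by (auto simp: reversepath_def)

lemma join_in:
  assumes "\<forall>s\<in>{0..1}. P s \<in> E" "\<forall>s\<in>{0..1}. Q s \<in> E"
  shows "\<forall>s\<in>{0..1::real}. (P +++ Q) s \<in> E"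
  using assms by (auto simp: joinpaths_def)

lemma rev_in:
  assumes "\<forall>s\<in>{0..1}. P s \<in> E"
  shows "\<forall>s\<in>{0..1::real}. reversepath P s \<in> E"
  using assms by (auto simp: reversepath_def)

lemma ST_eq: "solid_torus = cball 0 1 \<times> sphere 0 1"
  by (auto simp: solid_torus_def)

lemma compact_ST: "compact solid_torus"
  unfolding ST_eq by (intro compact_Times compact_cball compact_sphere)

lemma TB_sub: "torus_bdry \<subseteq> solid_torus"
  by (auto simp: torus_bdry_def solid_torus_def)

definition tchart :: "complex \<times> complex \<Rightarrow> complex \<times> real" where
  "tchart x = (complex_of_real (2 + Re (fst x)) * snd x, Im (fst x))"

lemma tchart_inj: "inj_on tchart solid_torus"
proof (rule inj_onI)
  fix x y assume x: "x \<in> solid_torus" and y: "y \<in> solid_torus" and e: "tchart x = tchart y"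
  obtain z w where xz: "x = (z,w)" by force
  obtain z' w' where yz: "y = (z',w')" by force
  have zw: "cmod z \<le> 1" "cmod w = 1" "cmod z' \<le> 1" "cmod w' = 1"
    using x y by (auto simp: xz yz solid_torus_def)
  have e1: "complex_of_real (2 + Re z) * w = complex_of_real (2 + Re z') * w'" and e2: "Im z = Im z'"
    using e by (auto simp: tchart_def xz yz)
  have r1: "Re z \<ge> -1" "Re z' \<ge> -1"
    using zw abs_Re_le_cmod[of z] abs_Re_le_cmod[of z'] by auto
  have "cmod (complex_of_real (2 + Re z) * w) = 2 + Re z"
    using zw r1 by (simp only: norm_mult norm_of_real) simp
  moreover have "cmod (complex_of_real (2 + Re z') * w') = 2 + Re z'"
    using zw r1 by (simp only: norm_mult norm_of_real) simp
  ultimately have "Re z = Re z'" using e1 by simp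
  hence "z = z'" using e2 complex_eqI by blast
  moreover have "w = w'"
  proof -
    have "complex_of_real (2 + Re z) \<noteq> 0" using r1 by (simp only: of_real_eq_0_iff)
    then show ?thesis using e1 \<open>Re z = Re z'\<close> by simp
  qed
  ultimately show "x = y" by (simp add: xz yz)
qed


lemma tchart_cont: "continuous_on A tchart"
  unfolding tchart_def by (intro continuous_intros)

lemma bdry_in_ext:
  assumes link: "oriented_link_nbhd L n \<phi>" and k: "k < n" and x: "x \<in> torus_bdry"
  shows "\<phi> k x \<in> link_exterior n \<phi>"
proof (rule ccontr)
  define q where "q = \<phi> k x"
  assume "\<phi> k x \<notin> link_exterior n \<phi>"
  hence "q \<notin> closure (S3 - nbhd n \<phi>)" by (simp add: q_def link_exterior_def)
  then obtain e where e: "e > 0" "\<And>y. y \<in> S3 - nbhd n \<phi> \<Longrightarrow> \<not> dist y q < e"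
    unfolding closure_approachable by auto
  have lk: "\<And>k. k<n \<Longrightarrow> continuous_on solid_torus (\<phi> k) \<and> inj_on (\<phi> k) solid_torus \<and> \<phi> k ` solid_torus \<subseteq> S3"
    "\<And>k j. k<n \<Longrightarrow> j<n \<Longrightarrow> k \<noteq> j \<Longrightarrow> \<phi> k ` solid_torus \<inter> \<phi> j ` solid_torus = {}"
    using link unfolding oriented_link_nbhd_def by auto
  have xST: "x \<in> solid_torus" using x TB_sub by auto
  define C where "C = (\<Union>j\<in>{j. j<n \<and> j \<noteq> k}. \<phi> j ` solid_torus)"
  have "compact C" unfolding C_def
    by (intro compact_UN finite_Collect_conjI) (use lk(1) compact_continuous_image compact_ST in blast)+
  hence "closed C" by (rule compact_imp_closed)
  have "q \<notin> C" using lk(2)[OF k] xST by (auto simp: C_def q_def)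
  then obtain e2 where e2: "e2 > 0" "ball q e2 \<subseteq> - C"
    using \<open>closed C\<close> open_contains_ball by (metis ComplI open_Compl)
  define S where "S = S3 \<inter> ball q (min e e2)"
  have SST: "S \<subseteq> \<phi> k ` solid_torus"
  proof
    fix y assume y: "y \<in> S"
    hence yS3: "y \<in> S3" and d: "dist q y < e" "dist q y < e2" by (auto simp: S_def)
    have "y \<in> nbhd n \<phi>" using e(2)[of y] yS3 d by (auto simp: dist_commute)
    then obtain j where j: "j < n" "y \<in> \<phi> j ` solid_torus" by (auto simp: nbhd_def)
    have "y \<notin> C" using e2(2) d by auto
    hence "j = k" using j by (auto simp: C_def)
    thus "y \<in> \<phi> k ` solid_torus" using j by simp
  qed
  define \<psi> where "\<psi> = inv_into solid_torus (\<phi> k)"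
  have \<psi>c: "continuous_on (\<phi> k ` solid_torus) \<psi>"
    unfolding \<psi>_def using lk(1)[OF k] compact_ST
    by (intro continuous_on_inv) (auto simp: inv_into_f_f)
  define f where "f = tchart \<circ> \<psi>"
  have fc: "continuous_on S f" unfolding f_def
    by (rule continuous_on_compose[OF continuous_on_subset[OF \<psi>c SST]]) (rule tchart_cont)
  have \<psi>S: "\<psi> ` S \<subseteq> solid_torus"
  proof
    fix v assume "v \<in> \<psi> ` S"
    then obtain y where "y \<in> S" "v = \<psi> y" by auto
    then show "v \<in> solid_torus" using SST unfolding \<psi>_def by (metis inv_into_into subsetD)
  qed
  have fi: "inj_on f S" unfolding f_def
    by (rule comp_inj_on[OF inj_on_inv_into[OF SST, folded \<psi>_def] inj_on_subset[OF tchart_inj \<psi>S]])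
  have "openin (top_of_set (UNIV :: (complex\<times>real) set)) (f ` S)"
  proof (rule invariance_of_domain_sphere_affine_set_gen[OF fc fi _ bounded_cball convex_cball])
    show "f \<in> S \<rightarrow> UNIV" by simp
    show "affine (UNIV :: (complex\<times>real) set)" by simp
    show "aff_dim (UNIV :: (complex\<times>real) set) < aff_dim (cball (0::complex\<times>complex) 1)"
      by (simp add: aff_dim_cball)
    show "openin (top_of_set (rel_frontier (cball (0::complex\<times>complex) 1))) S"
      unfolding S_def S3_def by auto
  qed
  hence "open (f ` S)" by simp
  have "q \<in> S" using lk(1)[OF k] xST e e2 by (auto simp: S_def q_def)
  hence "f q \<in> f ` S" by simp
  have fq: "f q = tchart x" using lk(1)[OF k] xST by (simp add: f_def \<psi>_def q_def inv_into_f_f)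
  obtain d where d: "d > 0" "ball (tchart x) d \<subseteq> f ` S"
    using \<open>open (f ` S)\<close> \<open>f q \<in> f ` S\<close> fq open_contains_ball by metis
  obtain z0 w0 where xz: "x = (z0, w0)" by force
  have zw: "cmod z0 = 1" "cmod w0 = 1" using x by (auto simp: xz torus_bdry_def)
  define l where "l = 1 + min (d/4) (1/2)"
  have l: "l > 1" "l \<le> 3/2" "2 * (l - 1) < d" using d by (auto simp: l_def)
  define y where "y = tchart (complex_of_real l * z0, w0)"
  have "dist y (tchart x) \<le> norm (complex_of_real ((l-1) * Re z0) * w0) + norm ((l-1) * Im z0)"
  proof -
    have "y - tchart x = (complex_of_real ((l-1) * Re z0) * w0, (l-1) * Im z0)"
      by (simp add: y_def xz tchart_def algebra_simps)
    thus ?thesis by (metis dist_norm norm_Pair_le)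
  qed
  also have "\<dots> \<le> (l - 1) + (l - 1)"
  proof -
    have "\<bar>Re z0\<bar> \<le> 1" "\<bar>Im z0\<bar> \<le> 1" using zw abs_Re_le_cmod abs_Im_le_cmod by metis+
    hence "\<bar>(l-1) * Re z0\<bar> \<le> l - 1" "\<bar>(l-1) * Im z0\<bar> \<le> l - 1" using l
      by (auto simp: abs_mult intro: mult_left_le)
    moreover have "norm (complex_of_real ((l-1) * Re z0) * w0) = \<bar>(l-1) * Re z0\<bar>"
      using zw by (simp only: norm_mult norm_of_real)
    moreover have "norm ((l-1) * Im z0) = \<bar>(l-1) * Im z0\<bar>" by simp
    ultimately show ?thesis by linarith
  qed
  finally have "y \<in> ball (tchart x) d" using l by (simp add: dist_commute)
  hence "y \<in> f ` S" using d by auto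
  then obtain v where v: "v \<in> S" "y = f v" by auto
  obtain x' where x': "x' \<in> solid_torus" "y = tchart x'"
  proof
    show "\<psi> v \<in> solid_torus" using v \<psi>S by auto
    show "y = tchart (\<psi> v)" using v by (simp add: f_def)
  qed
  obtain z' w' where xz': "x' = (z', w')" by force
  have zw': "cmod z' \<le> 1" "cmod w' = 1" using x' by (auto simp: xz' solid_torus_def)
  have e1: "complex_of_real (2 + Re z') * w' = complex_of_real (2 + l * Re z0) * w0"
    and e2': "Im z' = l * Im z0"
    using x'(2) by (auto simp: y_def xz' tchart_def)
  have r1: "Re z' \<ge> -1" using zw' abs_Re_le_cmod[of z'] by auto
  have "Re z0 \<ge> -1" using zw abs_Re_le_cmod[of z0] by auto
  hence r0: "l * Re z0 \<ge> - l" using mult_left_mono[of "-1" "Re z0" l] l by simp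
  have "cmod (complex_of_real (2 + Re z') * w') = 2 + Re z'"
    using zw' r1 by (simp only: norm_mult norm_of_real) simp
  moreover have "cmod (complex_of_real (2 + l * Re z0) * w0) = 2 + l * Re z0"
    using zw r0 l by (simp only: norm_mult norm_of_real) simp
  ultimately have "Re z' = l * Re z0" using e1 by simp
  hence "z' = complex_of_real l * z0" using e2' by (simp add: complex_eq_iff)
  hence "cmod z' = l" using zw l by (simp add: norm_mult)
  thus False using zw' l by simp
qed


lemma link_facts:
  assumes link: "oriented_link_nbhd L n \<phi>"
  shows "\<And>k. k<n \<Longrightarrow> continuous_on solid_torus (\<phi> k) \<and> inj_on (\<phi> k) solid_torus \<and> \<phi> k ` solid_torus \<subseteq> S3"
    "\<And>k j. k<n \<Longrightarrow> j<n \<Longrightarrow> k \<noteq> j \<Longrightarrow> \<phi> k ` solid_torus \<inter> \<phi> j ` solid_torus = {}"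
  using link unfolding oriented_link_nbhd_def by auto

lemma meridian_eq:
  assumes link: "oriented_link_nbhd L n \<phi>" and k: "k < n" and x: "x \<in> torus_bdry"
  shows "meridian n \<phi> (\<phi> k x) = (\<lambda>t. \<phi> k (fst x * cis (2*pi*t), snd x))"
proof -
  define P where "P = (\<lambda>(k', z, w). k' < n \<and> (z, w) \<in> torus_bdry \<and> \<phi> k' (z, w) = \<phi> k x)"
  have "P (k, fst x, snd x)" using k x by (simp add: P_def)
  hence sP: "P (SOME t. P t)" by (rule someI)
  obtain k' z w where kzw: "(SOME t. P t) = (k', z, w)" by (metis prod_cases3)
  have "P (k', z, w)" using sP kzw by simp
  hence h: "k' < n" "(z,w) \<in> torus_bdry" "\<phi> k' (z, w) = \<phi> k x" by (simp_all add: P_def)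
  have "k' = k"
  proof (rule ccontr)
    assume "k' \<noteq> k"
    hence "\<phi> k' ` solid_torus \<inter> \<phi> k ` solid_torus = {}" using link_facts(2)[OF link h(1) k] by simp
    moreover have "\<phi> k x \<in> \<phi> k' ` solid_torus" using h TB_sub by (metis image_eqI subsetD)
    moreover have "\<phi> k x \<in> \<phi> k ` solid_torus" using x TB_sub by auto
    ultimately show False by blast
  qed
  hence "(z, w) = x" using h link_facts(1)[OF link k] x TB_sub
    by (metis inj_on_def subsetD)
  hence "(SOME t. P t) = (k, fst x, snd x)" using kzw \<open>k' = k\<close> by auto
  thus ?thesis unfolding meridian_def P_def by (simp add: case_prod_unfold)
qed

lemma TB_cis: "x \<in> torus_bdry \<Longrightarrow> (fst x * cis a, snd x) \<in> torus_bdry"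
  by (auto simp: torus_bdry_def norm_mult)

lemma nbhd_bdry_E:
  assumes "p \<in> nbhd_bdry n \<phi>"
  obtains k x where "k < n" "x \<in> torus_bdry" "p = \<phi> k x"
  using assms by (auto simp: nbhd_bdry_def)

lemma meridian_props:
  assumes link: "oriented_link_nbhd L n \<phi>" and p: "p \<in> nbhd_bdry n \<phi>"
  shows "meridian n \<phi> p 0 = p" "meridian n \<phi> p 1 = p"
    "\<And>s. meridian n \<phi> p s \<in> link_exterior n \<phi>" "path (meridian n \<phi> p)"
proof -
  obtain k x where kx: "k < n" "x \<in> torus_bdry" "p = \<phi> k x" using p by (rule nbhd_bdry_E)
  have m: "meridian n \<phi> p = (\<lambda>t. \<phi> k (fst x * cis (2*pi*t), snd x))"
    using meridian_eq[OF link kx(1,2)] kx(3) by simp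
  show "meridian n \<phi> p 0 = p" "meridian n \<phi> p 1 = p" unfolding m by (simp_all add: kx(3))
  show "\<And>s. meridian n \<phi> p s \<in> link_exterior n \<phi>"
    unfolding m using bdry_in_ext[OF link kx(1) TB_cis[OF kx(2)]] by simp
  have "continuous_on {0..1} (\<lambda>t. \<phi> k (fst x * cis (2*pi*t), snd x))"
  proof (rule continuous_on_compose2[where f="\<lambda>t. (fst x * cis (2*pi*t), snd x)"])
    show "continuous_on solid_torus (\<phi> k)" using link_facts(1)[OF link kx(1)] by simp
    show "continuous_on {0..1} (\<lambda>t. (fst x * cis (2*pi*t), snd x))" by (intro continuous_intros)
    show "(\<lambda>t. (fst x * cis (2*pi*t), snd x)) ` {0..1} \<subseteq> solid_torus"
      using TB_cis[OF kx(2)] TB_sub by auto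
  qed
  thus "path (meridian n \<phi> p)" unfolding m path_def by simp
qed

lemma compact_TB: "compact torus_bdry"
proof -
  have "torus_bdry = sphere 0 1 \<times> sphere 0 1" by (auto simp: torus_bdry_def)
  thus ?thesis by (metis compact_Times compact_sphere)
qed

lemma meridian_cont:
  assumes link: "oriented_link_nbhd L n \<phi>"
  shows "continuous_on (nbhd_bdry n \<phi> \<times> {0..1}) (\<lambda>(p,s). meridian n \<phi> p s)"
proof -
  have eq: "nbhd_bdry n \<phi> \<times> {0..1} = (\<Union>k\<in>{..<n}. \<phi> k ` torus_bdry \<times> {0..1})"
    by (auto simp: nbhd_bdry_def)
  show ?thesis unfolding eq
  proof (rule continuous_on_closed_Union)
    fix k assume k: "k \<in> {..<n}"
    hence k: "k < n" by simp
    have c\<phi>: "continuous_on solid_torus (\<phi> k)" and i\<phi>: "inj_on (\<phi> k) solid_torus"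
      using link_facts(1)[OF link k] by auto
    have cTB: "continuous_on torus_bdry (\<phi> k)" using c\<phi> TB_sub continuous_on_subset by blast
    show "closed (\<phi> k ` torus_bdry \<times> {0..1::real})"
      by (intro compact_imp_closed compact_Times compact_continuous_image[OF cTB compact_TB]) simp
    define \<psi> where "\<psi> = inv_into torus_bdry (\<phi> k)"
    have i2: "inj_on (\<phi> k) torus_bdry" using i\<phi> TB_sub inj_on_subset by blast
    have \<psi>c: "continuous_on (\<phi> k ` torus_bdry) \<psi>"
      unfolding \<psi>_def using cTB compact_TB i2
      by (intro continuous_on_inv) (auto simp: inv_into_f_f)
    have \<psi>in: "\<And>p. p \<in> \<phi> k ` torus_bdry \<Longrightarrow> \<psi> p \<in> torus_bdry \<and> \<phi> k (\<psi> p) = p"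
      unfolding \<psi>_def by (auto simp: inv_into_f_f i2)
    have g: "continuous_on (\<phi> k ` torus_bdry \<times> {0..1})
       (\<lambda>x. (fst (\<psi> (fst x)) * cis (2 * pi * snd x), snd (\<psi> (fst x))))"
      by (intro continuous_intros continuous_on_compose2[OF \<psi>c]) auto
    have "continuous_on (\<phi> k ` torus_bdry \<times> {0..1})
       (\<lambda>x. \<phi> k (fst (\<psi> (fst x)) * cis (2 * pi * snd x), snd (\<psi> (fst x))))"
      by (rule continuous_on_compose2[OF c\<phi> g]) (use \<psi>in TB_cis TB_sub in fastforce)
    then show "continuous_on (\<phi> k ` torus_bdry \<times> {0..1}) (\<lambda>(p,s). meridian n \<phi> p s)"
    proof (rule continuous_on_eq)
      fix x assume "x \<in> \<phi> k ` torus_bdry \<times> {0..1::real}"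
      then obtain p s where ps: "x = (p,s)" "p \<in> \<phi> k ` torus_bdry" by auto
      have "meridian n \<phi> p = meridian n \<phi> (\<phi> k (\<psi> p))" using \<psi>in ps by simp
      also have "\<dots> = (\<lambda>t. \<phi> k (fst (\<psi> p) * cis (2*pi*t), snd (\<psi> p)))"
        using meridian_eq[OF link k] \<psi>in ps by blast
      finally show "\<phi> k (fst (\<psi> (fst x)) * cis (2 * pi * snd x), snd (\<psi> (fst x))) = (\<lambda>(p,s). meridian n \<phi> p s) x"
        using ps by simp
    qed
  qed simp
qed


lemma half_vals:
  assumes "pathstart a1 = pathstart a0" "s \<in> {0..1::real}"
  shows "(reversepath a0 +++ a1) ((1-s)/2) = a0 s" "(reversepath a0 +++ a1) ((1+s)/2) = a1 s"
  using assms by (auto simp: joinpaths_def reversepath_def pathstart_def field_simps)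

lemma cont_half:
  assumes "continuous_on ({0..1}\<times>{0..1}) H"
  shows "continuous_on ({0..1}\<times>{0..1}) (\<lambda>(t::real,s::real). H (t, (1-s)/2))"
    "continuous_on ({0..1}\<times>{0..1}) (\<lambda>(t::real,s::real). H (t, (1+s)/2))"
proof -
  have e1: "(\<lambda>(t::real,s::real). H (t, (1-s)/2)) = (\<lambda>x. H (fst x, (1 - snd x)/2))" by auto
  have e2: "(\<lambda>(t::real,s::real). H (t, (1+s)/2)) = (\<lambda>x. H (fst x, (1 + snd x)/2))" by auto
  show "continuous_on ({0..1}\<times>{0..1}) (\<lambda>(t::real,s::real). H (t, (1-s)/2))" unfolding e1
    by (rule continuous_on_compose2[OF assms]) (auto intro!: continuous_intros)
  show "continuous_on ({0..1}\<times>{0..1}) (\<lambda>(t::real,s::real). H (t, (1+s)/2))" unfolding e2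
    by (rule continuous_on_compose2[OF assms]) (auto intro!: continuous_intros)
qed

lemma mid_cont:
  fixes G :: "real \<times> real \<Rightarrow> complex \<times> complex"
  assumes link: "oriented_link_nbhd L n \<phi>" and G: "continuous_on ({0..1}\<times>{0..1}) G"
    and Gm: "\<And>t. t \<in> {0..1} \<Longrightarrow> G (t, 1/2) \<in> nbhd_bdry n \<phi>"
  shows "continuous_on ({0..1}\<times>{0..1}) (\<lambda>(t::real,s). meridian n \<phi> (G (t, 1/2)) s)"
proof -
  have e: "(\<lambda>(t::real,s). meridian n \<phi> (G (t, 1/2)) s) = (\<lambda>x. (\<lambda>(p,s). meridian n \<phi> p s) (G (fst x, 1/2), snd x))"
    by auto
  have c: "continuous_on ({0..1}\<times>{0..1}) (\<lambda>x::real\<times>real. (G (fst x, 1/2), snd x))"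
    by (intro continuous_intros continuous_on_compose2[OF G]) auto
  show ?thesis unfolding e
    by (rule continuous_on_compose2[OF meridian_cont[OF link] c]) (auto simp: Gm)
qed


lemma BL_D:
  assumes "a \<in> B_L n \<phi> z0 z1"
  shows "path (fst a)" "path (snd a)" "path_image (fst a) \<subseteq> link_exterior n \<phi>"
    "path_image (snd a) \<subseteq> link_exterior n \<phi>" "pathstart (fst a) \<in> nbhd_bdry n \<phi>"
    "pathstart (snd a) = pathstart (fst a)" "pathfinish (fst a) = z0" "pathfinish (snd a) = z1"
  using assms by (auto simp: B_L_def)

lemma BL_up_down:
  assumes link: "oriented_link_nbhd L n \<phi>" and a: "a \<in> B_L n \<phi> z0 z1" and b: "b \<in> B_L n \<phi> z0 z1"
  shows "B_up n \<phi> a b \<in> B_L n \<phi> z0 z1" "B_down n \<phi> a b \<in> B_L n \<phi> z0 z1"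
proof -
  note A = BL_D[OF a] and B = BL_D[OF b]
  define m where "m = meridian n \<phi> (pathstart (fst b))"
  have m: "pathstart m = pathstart (fst b)" "pathfinish m = pathstart (fst b)" "path m"
     "path_image m \<subseteq> link_exterior n \<phi>"
    using meridian_props[OF link B(5)] by (auto simp: m_def pathstart_def pathfinish_def path_image_def)
  have i1: "path_image (fst a +++ reversepath (fst b) +++ m +++ fst b) \<subseteq> link_exterior n \<phi>"
    by (intro subset_path_image_join) (simp_all add: path_image_reversepath A B m)
  show "B_up n \<phi> a b \<in> B_L n \<phi> z0 z1"
    unfolding B_up_def B_L_def m_def[symmetric]
    using A B m i1
    by (auto intro!: path_join_imp subset_path_image_join simp: path_image_reversepath)
  have m': "m = meridian n \<phi> (pathstart (snd b))" using B(6) by (simp add: m_def)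
  have i2: "path_image (snd a +++ reversepath (snd b) +++ m +++ snd b) \<subseteq> link_exterior n \<phi>"
    by (intro subset_path_image_join) (simp_all add: path_image_reversepath A B m)
  show "B_down n \<phi> a b \<in> B_L n \<phi> z0 z1"
    unfolding B_down_def B_L_def m'[symmetric]
    using A B m i2
    by (auto intro!: path_join_imp subset_path_image_join simp: path_image_reversepath)
qed


lemma equiv_D:
  assumes "B_equiv n \<phi> z0 z1 a c"
  obtains H :: "real \<times> real \<Rightarrow> complex \<times> complex" where "continuous_on ({0..1}\<times>{0..1}) H"
    "\<And>t s. t \<in> {0..1} \<Longrightarrow> s \<in> {0..1} \<Longrightarrow> H (t,s) \<in> link_exterior n \<phi>"
    "\<And>s. s\<in>{0..1} \<Longrightarrow> H (0, s) = (reversepath (fst a) +++ snd a) s"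
    "\<And>s. s\<in>{0..1} \<Longrightarrow> H (1, s) = (reversepath (fst c) +++ snd c) s"
    "\<And>t. t\<in>{0..1} \<Longrightarrow> H (t, 0) = z0" "\<And>t. t\<in>{0..1} \<Longrightarrow> H (t, 1) = z1"
    "\<And>t. t\<in>{0..1} \<Longrightarrow> H (t, 1/2) \<in> nbhd_bdry n \<phi>"
proof -
  from assms[unfolded B_equiv_def] obtain H :: "real \<times> real \<Rightarrow> complex \<times> complex" where h0: "continuous_on ({0..1}\<times>{0..1}) H \<and>
    H ` ({0..1}\<times>{0..1}) \<subseteq> link_exterior n \<phi> \<and>
    (\<forall>s\<in>{0..1}. H (0, s) = (reversepath (fst a) +++ snd a) s) \<and>
    (\<forall>s\<in>{0..1}. H (1, s) = (reversepath (fst c) +++ snd c) s) \<and>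
    (\<forall>t\<in>{0..1}. H (t, 0) = z0 \<and> H (t, 1) = z1 \<and> H (t, 1/2) \<in> nbhd_bdry n \<phi>)"
    ..
  note h = conjunct1[OF h0] conjunct1[OF conjunct2[OF h0]] conjunct1[OF conjunct2[OF conjunct2[OF h0]]]
    conjunct1[OF conjunct2[OF conjunct2[OF conjunct2[OF h0]]]] conjunct2[OF conjunct2[OF conjunct2[OF conjunct2[OF h0]]]]
  show ?thesis
  proof (rule that[of H])
    show "continuous_on ({0..1}\<times>{0..1}) H" by (rule h(1))
    show "\<And>t s. t \<in> {0..1} \<Longrightarrow> s \<in> {0..1} \<Longrightarrow> H (t,s) \<in> link_exterior n \<phi>"
      using h(2) by (meson SigmaI image_subset_iff)
    show "\<And>s. s\<in>{0..1} \<Longrightarrow> H (0, s) = (reversepath (fst a) +++ snd a) s" using h(3) by blast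
    show "\<And>s. s\<in>{0..1} \<Longrightarrow> H (1, s) = (reversepath (fst c) +++ snd c) s" using h(4) by blast
    show "\<And>t. t\<in>{0..1} \<Longrightarrow> H (t, 0) = z0" "\<And>t. t\<in>{0..1} \<Longrightarrow> H (t, 1) = z1"
      "\<And>t. t\<in>{0..1} \<Longrightarrow> H (t, 1/2) \<in> nbhd_bdry n \<phi>" using h(5) by blast+
  qed
qed

lemma halves:
  fixes H :: "real \<times> real \<Rightarrow> complex \<times> complex"
  assumes a: "a \<in> B_L n \<phi> z0 z1" and c: "c \<in> B_L n \<phi> z0 z1"
    and H: "continuous_on ({0..1}\<times>{0..1}) H"
    and H2: "\<forall>t\<in>{0..1}. \<forall>s\<in>{0..1}. H (t,s) \<in> link_exterior n \<phi>"
    and H3: "\<forall>s\<in>{0..1}. H (0, s) = (reversepath (fst a) +++ snd a) s"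
    and H4: "\<forall>s\<in>{0..1}. H (1, s) = (reversepath (fst c) +++ snd c) s"
  shows "continuous_on ({0..1}\<times>{0..1}) (\<lambda>(t,s). H (t, (1-s)/2))"
    "continuous_on ({0..1}\<times>{0..1}) (\<lambda>(t,s). H (t, (1+s)/2))"
    "\<And>t. t \<in> {0..1} \<Longrightarrow> \<forall>s\<in>{0..1}. H (t, (1-s)/2) \<in> link_exterior n \<phi>"
    "\<And>t. t \<in> {0..1} \<Longrightarrow> \<forall>s\<in>{0..1}. H (t, (1+s)/2) \<in> link_exterior n \<phi>"
    "\<forall>s\<in>{0..1}. H (0, (1-s)/2) = fst a s" "\<forall>s\<in>{0..1}. H (0, (1+s)/2) = snd a s"
    "\<forall>s\<in>{0..1}. H (1, (1-s)/2) = fst c s" "\<forall>s\<in>{0..1}. H (1, (1+s)/2) = snd c s"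
proof -
  show "continuous_on ({0..1}\<times>{0..1}) (\<lambda>(t,s). H (t, (1-s)/2))"
    "continuous_on ({0..1}\<times>{0..1}) (\<lambda>(t,s). H (t, (1+s)/2))"
    by (rule cont_half(1)[OF H], rule cont_half(2)[OF H])
  have r1: "\<And>s::real. s \<in> {0..1} \<Longrightarrow> (1-s)/2 \<in> {0..1}" and r2: "\<And>s::real. s \<in> {0..1} \<Longrightarrow> (1+s)/2 \<in> {0..1}"
    by auto
  show "\<And>t. t \<in> {0..1} \<Longrightarrow> \<forall>s\<in>{0..1}. H (t, (1-s)/2) \<in> link_exterior n \<phi>"
    "\<And>t. t \<in> {0..1} \<Longrightarrow> \<forall>s\<in>{0..1}. H (t, (1+s)/2) \<in> link_exterior n \<phi>"
  proof -
    fix t :: real assume t: "t \<in> {0..1}"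
    show "\<forall>s\<in>{0..1}. H (t, (1-s)/2) \<in> link_exterior n \<phi>"
    proof
      fix s :: real assume s: "s \<in> {0..1}"
      show "H (t, (1-s)/2) \<in> link_exterior n \<phi>" using H2 t r1[OF s] by blast
    qed
  next
    fix t :: real assume t: "t \<in> {0..1}"
    show "\<forall>s\<in>{0..1}. H (t, (1+s)/2) \<in> link_exterior n \<phi>"
    proof
      fix s :: real assume s: "s \<in> {0..1}"
      show "H (t, (1+s)/2) \<in> link_exterior n \<phi>" using H2 t r2[OF s] by blast
    qed
  qed
  have sa: "pathstart (snd a) = pathstart (fst a)" and sc: "pathstart (snd c) = pathstart (fst c)"
    using BL_D(6) a c by auto
  show "\<forall>s\<in>{0..1}. H (0, (1-s)/2) = fst a s"
  proof
    fix s :: real assume s: "s \<in> {0..1}"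
    show "H (0, (1-s)/2) = fst a s" using bspec[OF H3 r1[OF s]] half_vals(1)[OF sa s] by (rule trans)
  qed
  show "\<forall>s\<in>{0..1}. H (0, (1+s)/2) = snd a s"
  proof
    fix s :: real assume s: "s \<in> {0..1}"
    show "H (0, (1+s)/2) = snd a s" using bspec[OF H3 r2[OF s]] half_vals(2)[OF sa s] by (rule trans)
  qed
  show "\<forall>s\<in>{0..1}. H (1, (1-s)/2) = fst c s"
  proof
    fix s :: real assume s: "s \<in> {0..1}"
    show "H (1, (1-s)/2) = fst c s" using bspec[OF H4 r1[OF s]] half_vals(1)[OF sc s] by (rule trans)
  qed
  show "\<forall>s\<in>{0..1}. H (1, (1+s)/2) = snd c s"
  proof
    fix s :: real assume s: "s \<in> {0..1}"
    show "H (1, (1+s)/2) = snd c s" using bspec[OF H4 r2[OF s]] half_vals(2)[OF sc s] by (rule trans)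
  qed
qed


lemma equiv_up:
  assumes link: "oriented_link_nbhd L n \<phi>"
    and a: "a \<in> B_L n \<phi> z0 z1" and b: "b \<in> B_L n \<phi> z0 z1"
    and c: "c \<in> B_L n \<phi> z0 z1" and d: "d \<in> B_L n \<phi> z0 z1"
    and ac: "B_equiv n \<phi> z0 z1 a c" and bd: "B_equiv n \<phi> z0 z1 b d"
  shows "B_equiv n \<phi> z0 z1 (B_up n \<phi> a b) (B_up n \<phi> c d)"
proof -
  obtain H :: "real \<times> real \<Rightarrow> complex \<times> complex" where H: "continuous_on ({0..1}\<times>{0..1}) H"
    "\<And>t s. t \<in> {0..1} \<Longrightarrow> s \<in> {0..1} \<Longrightarrow> H (t,s) \<in> link_exterior n \<phi>"
    "\<And>s. s\<in>{0..1} \<Longrightarrow> H (0, s) = (reversepath (fst a) +++ snd a) s"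
    "\<And>s. s\<in>{0..1} \<Longrightarrow> H (1, s) = (reversepath (fst c) +++ snd c) s"
    "\<And>t. t\<in>{0..1} \<Longrightarrow> H (t, 0) = z0" "\<And>t. t\<in>{0..1} \<Longrightarrow> H (t, 1) = z1"
    "\<And>t. t\<in>{0..1} \<Longrightarrow> H (t, 1/2) \<in> nbhd_bdry n \<phi>"
    by (rule equiv_D[OF ac]) blast
  obtain G :: "real \<times> real \<Rightarrow> complex \<times> complex" where G: "continuous_on ({0..1}\<times>{0..1}) G"
    "\<And>t s. t \<in> {0..1} \<Longrightarrow> s \<in> {0..1} \<Longrightarrow> G (t,s) \<in> link_exterior n \<phi>"
    "\<And>s. s\<in>{0..1} \<Longrightarrow> G (0, s) = (reversepath (fst b) +++ snd b) s"
    "\<And>s. s\<in>{0..1} \<Longrightarrow> G (1, s) = (reversepath (fst d) +++ snd d) s"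
    "\<And>t. t\<in>{0..1} \<Longrightarrow> G (t, 0) = z0" "\<And>t. t\<in>{0..1} \<Longrightarrow> G (t, 1) = z1"
    "\<And>t. t\<in>{0..1} \<Longrightarrow> G (t, 1/2) \<in> nbhd_bdry n \<phi>"
    by (rule equiv_D[OF bd]) blast
  have H2: "\<forall>t\<in>{0..1}. \<forall>s\<in>{0..1}. H (t,s) \<in> link_exterior n \<phi>" using H(2) by blast
  have G2: "\<forall>t\<in>{0..1}. \<forall>s\<in>{0..1}. G (t,s) \<in> link_exterior n \<phi>" using G(2) by blast
  have H34: "\<forall>s\<in>{0..1}. H (0, s) = (reversepath (fst a) +++ snd a) s"
    "\<forall>s\<in>{0..1}. H (1, s) = (reversepath (fst c) +++ snd c) s" using H(3,4) by blast+
  have G34: "\<forall>s\<in>{0..1}. G (0, s) = (reversepath (fst b) +++ snd b) s"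
    "\<forall>s\<in>{0..1}. G (1, s) = (reversepath (fst d) +++ snd d) s" using G(3,4) by blast+
  note hA = halves[OF a c H(1) H2 H34] and hB = halves[OF b d G(1) G2 G34]
  define A where "A = (\<lambda>t s. H (t, (1-s)/2))"
  define A1 where "A1 = (\<lambda>t s. H (t, (1+s)/2))"
  define B where "B = (\<lambda>t s. G (t, (1-s)/2))"
  define M where "M = (\<lambda>t. meridian n \<phi> (G (t, 1/2)))"
  have cA: "continuous_on ({0..1}\<times>{0..1}) (\<lambda>(t,s). A t s)" using hA(1) by (simp add: A_def)
  have cA1: "continuous_on ({0..1}\<times>{0..1}) (\<lambda>(t,s). A1 t s)" using hA(2) by (simp add: A1_def)
  have cB: "continuous_on ({0..1}\<times>{0..1}) (\<lambda>(t,s). B t s)" using hB(1) by (simp add: B_def)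
  have cM: "continuous_on ({0..1}\<times>{0..1}) (\<lambda>(t,s). M t s)" unfolding M_def
    by (rule mid_cont[OF link G(1) G(7)])
  have M01: "\<And>t. t \<in> {0..1} \<Longrightarrow> M t 0 = G (t, 1/2) \<and> M t 1 = G (t, 1/2)"
    unfolding M_def using meridian_props(1,2)[OF link G(7)] by blast
  have ME: "\<And>t. t \<in> {0..1} \<Longrightarrow> \<forall>s\<in>{0..1}. M t s \<in> link_exterior n \<phi>"
    unfolding M_def using meridian_props(3)[OF link G(7)] by blast
  define K where "K = (\<lambda>t. reversepath (A t +++ reversepath (B t) +++ M t +++ B t) +++ A1 t)"
  have c1: "continuous_on ({0..1}\<times>{0..1}) (\<lambda>(t,s). (M t +++ B t) s)"
    by (rule fam_join[OF cM cB]) (simp add: M01 B_def)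
  have c2: "continuous_on ({0..1}\<times>{0..1}) (\<lambda>(t,s). (reversepath (B t) +++ M t +++ B t) s)"
    by (rule fam_join[OF fam_rev[OF cB] c1]) (simp add: M01 B_def reversepath_def joinpaths_def)
  have c3: "continuous_on ({0..1}\<times>{0..1}) (\<lambda>(t,s). (A t +++ reversepath (B t) +++ M t +++ B t) s)"
    by (rule fam_join[OF cA c2]) (simp add: A_def B_def reversepath_def joinpaths_def H(5) G(5))
  have cK: "continuous_on ({0..1}\<times>{0..1}) (\<lambda>(t,s). K t s)" unfolding K_def
    by (rule fam_join[OF fam_rev[OF c3] cA1]) (simp add: A_def A1_def reversepath_def joinpaths_def)
  have KE: "\<And>t. t \<in> {0..1} \<Longrightarrow> \<forall>s\<in>{0..1}. K t s \<in> link_exterior n \<phi>"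
  proof -
    fix t :: real assume t: "t \<in> {0..1}"
    have eA: "\<forall>s\<in>{0..1}. A t s \<in> link_exterior n \<phi>" using hA(3)[OF t] by (simp add: A_def)
    have eA1: "\<forall>s\<in>{0..1}. A1 t s \<in> link_exterior n \<phi>" using hA(4)[OF t] by (simp add: A1_def)
    have eB: "\<forall>s\<in>{0..1}. B t s \<in> link_exterior n \<phi>" using hB(3)[OF t] by (simp add: B_def)
    show "\<forall>s\<in>{0..1}. K t s \<in> link_exterior n \<phi>" unfolding K_def
      by (intro join_in rev_in eA eA1 eB ME[OF t])
  qed
  have G0: "G (0, 1/2) = pathstart (fst b)"
    using G(3)[of "1/2"] by (simp add: joinpaths_def reversepath_def pathstart_def)
  have G1: "G (1, 1/2) = pathstart (fst d)"
    using G(3-4)[of "1/2"] by (simp add: joinpaths_def reversepath_def pathstart_def)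
  have K0: "\<forall>s\<in>{0..1}. K 0 s = (reversepath (fst (B_up n \<phi> a b)) +++ snd (B_up n \<phi> a b)) s"
    unfolding K_def B_up_def fst_conv snd_conv
    by (intro join_cong rev_cong) (simp_all add: hA(5,6) hB(5) A_def A1_def B_def M_def G0)
  have K1: "\<forall>s\<in>{0..1}. K 1 s = (reversepath (fst (B_up n \<phi> c d)) +++ snd (B_up n \<phi> c d)) s"
    unfolding K_def B_up_def fst_conv snd_conv
    by (intro join_cong rev_cong) (simp_all add: hA(7,8) hB(7) A_def A1_def B_def M_def G1)
  have Kt: "\<forall>t\<in>{0..1}. K t 0 = z0 \<and> K t 1 = z1 \<and> K t (1/2) \<in> nbhd_bdry n \<phi>"
    by (simp add: K_def A_def A1_def B_def reversepath_def joinpaths_def H(5-7) G(5))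
  show ?thesis unfolding B_equiv_def
  proof (intro exI[of _ "\<lambda>(t,s). K t s"] conjI)
    show "continuous_on ({0..1}\<times>{0..1}) (\<lambda>(t,s). K t s)" by (rule cK)
    show "(\<lambda>(t,s). K t s) ` ({0..1}\<times>{0..1}) \<subseteq> link_exterior n \<phi>" using KE by auto
  qed (use K0 K1 Kt in simp_all)
qed

lemma equiv_down:
  assumes link: "oriented_link_nbhd L n \<phi>"
    and a: "a \<in> B_L n \<phi> z0 z1" and b: "b \<in> B_L n \<phi> z0 z1"
    and c: "c \<in> B_L n \<phi> z0 z1" and d: "d \<in> B_L n \<phi> z0 z1"
    and ac: "B_equiv n \<phi> z0 z1 a c" and bd: "B_equiv n \<phi> z0 z1 b d"
  shows "B_equiv n \<phi> z0 z1 (B_down n \<phi> a b) (B_down n \<phi> c d)"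
proof -
  obtain H :: "real \<times> real \<Rightarrow> complex \<times> complex" where H: "continuous_on ({0..1}\<times>{0..1}) H"
    "\<And>t s. t \<in> {0..1} \<Longrightarrow> s \<in> {0..1} \<Longrightarrow> H (t,s) \<in> link_exterior n \<phi>"
    "\<And>s. s\<in>{0..1} \<Longrightarrow> H (0, s) = (reversepath (fst a) +++ snd a) s"
    "\<And>s. s\<in>{0..1} \<Longrightarrow> H (1, s) = (reversepath (fst c) +++ snd c) s"
    "\<And>t. t\<in>{0..1} \<Longrightarrow> H (t, 0) = z0" "\<And>t. t\<in>{0..1} \<Longrightarrow> H (t, 1) = z1"
    "\<And>t. t\<in>{0..1} \<Longrightarrow> H (t, 1/2) \<in> nbhd_bdry n \<phi>"
    by (rule equiv_D[OF ac]) blast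
  obtain G :: "real \<times> real \<Rightarrow> complex \<times> complex" where G: "continuous_on ({0..1}\<times>{0..1}) G"
    "\<And>t s. t \<in> {0..1} \<Longrightarrow> s \<in> {0..1} \<Longrightarrow> G (t,s) \<in> link_exterior n \<phi>"
    "\<And>s. s\<in>{0..1} \<Longrightarrow> G (0, s) = (reversepath (fst b) +++ snd b) s"
    "\<And>s. s\<in>{0..1} \<Longrightarrow> G (1, s) = (reversepath (fst d) +++ snd d) s"
    "\<And>t. t\<in>{0..1} \<Longrightarrow> G (t, 0) = z0" "\<And>t. t\<in>{0..1} \<Longrightarrow> G (t, 1) = z1"
    "\<And>t. t\<in>{0..1} \<Longrightarrow> G (t, 1/2) \<in> nbhd_bdry n \<phi>"
    by (rule equiv_D[OF bd]) blast
  have H2: "\<forall>t\<in>{0..1}. \<forall>s\<in>{0..1}. H (t,s) \<in> link_exterior n \<phi>" using H(2) by blast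
  have G2: "\<forall>t\<in>{0..1}. \<forall>s\<in>{0..1}. G (t,s) \<in> link_exterior n \<phi>" using G(2) by blast
  have H34: "\<forall>s\<in>{0..1}. H (0, s) = (reversepath (fst a) +++ snd a) s"
    "\<forall>s\<in>{0..1}. H (1, s) = (reversepath (fst c) +++ snd c) s" using H(3,4) by blast+
  have G34: "\<forall>s\<in>{0..1}. G (0, s) = (reversepath (fst b) +++ snd b) s"
    "\<forall>s\<in>{0..1}. G (1, s) = (reversepath (fst d) +++ snd d) s" using G(3,4) by blast+
  note hA = halves[OF a c H(1) H2 H34] and hB = halves[OF b d G(1) G2 G34]
  define A where "A = (\<lambda>t s. H (t, (1-s)/2))"
  define A1 where "A1 = (\<lambda>t s. H (t, (1+s)/2))"
  define B where "B = (\<lambda>t s. G (t, (1+s)/2))"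
  define M where "M = (\<lambda>t. meridian n \<phi> (G (t, 1/2)))"
  have cA: "continuous_on ({0..1}\<times>{0..1}) (\<lambda>(t,s). A t s)" using hA(1) by (simp add: A_def)
  have cA1: "continuous_on ({0..1}\<times>{0..1}) (\<lambda>(t,s). A1 t s)" using hA(2) by (simp add: A1_def)
  have cB: "continuous_on ({0..1}\<times>{0..1}) (\<lambda>(t,s). B t s)" using hB(2) by (simp add: B_def)
  have cM: "continuous_on ({0..1}\<times>{0..1}) (\<lambda>(t,s). M t s)" unfolding M_def
    by (rule mid_cont[OF link G(1) G(7)])
  have M01: "\<And>t. t \<in> {0..1} \<Longrightarrow> M t 0 = G (t, 1/2) \<and> M t 1 = G (t, 1/2)"
    unfolding M_def using meridian_props(1,2)[OF link G(7)] by blast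
  have ME: "\<And>t. t \<in> {0..1} \<Longrightarrow> \<forall>s\<in>{0..1}. M t s \<in> link_exterior n \<phi>"
    unfolding M_def using meridian_props(3)[OF link G(7)] by blast
  define K where "K = (\<lambda>t. reversepath (A t) +++ A1 t +++ reversepath (B t) +++ M t +++ B t)"
  have c1: "continuous_on ({0..1}\<times>{0..1}) (\<lambda>(t,s). (M t +++ B t) s)"
    by (rule fam_join[OF cM cB]) (simp add: M01 B_def)
  have c2: "continuous_on ({0..1}\<times>{0..1}) (\<lambda>(t,s). (reversepath (B t) +++ M t +++ B t) s)"
    by (rule fam_join[OF fam_rev[OF cB] c1]) (simp add: M01 B_def reversepath_def joinpaths_def)
  have c3: "continuous_on ({0..1}\<times>{0..1}) (\<lambda>(t,s). (A1 t +++ reversepath (B t) +++ M t +++ B t) s)"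
    by (rule fam_join[OF cA1 c2]) (simp add: A1_def B_def reversepath_def joinpaths_def H(6) G(6))
  have cK: "continuous_on ({0..1}\<times>{0..1}) (\<lambda>(t,s). K t s)" unfolding K_def
    by (rule fam_join[OF fam_rev[OF cA] c3]) (simp add: A_def A1_def reversepath_def joinpaths_def)
  have KE: "\<And>t. t \<in> {0..1} \<Longrightarrow> \<forall>s\<in>{0..1}. K t s \<in> link_exterior n \<phi>"
  proof -
    fix t :: real assume t: "t \<in> {0..1}"
    have eA: "\<forall>s\<in>{0..1}. A t s \<in> link_exterior n \<phi>" using hA(3)[OF t] by (simp add: A_def)
    have eA1: "\<forall>s\<in>{0..1}. A1 t s \<in> link_exterior n \<phi>" using hA(4)[OF t] by (simp add: A1_def)
    have eB: "\<forall>s\<in>{0..1}. B t s \<in> link_exterior n \<phi>" using hB(4)[OF t] by (simp add: B_def)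
    show "\<forall>s\<in>{0..1}. K t s \<in> link_exterior n \<phi>" unfolding K_def
      by (intro join_in rev_in eA eA1 eB ME[OF t])
  qed
  have sb: "pathstart (snd b) = pathstart (fst b)" and sd: "pathstart (snd d) = pathstart (fst d)"
    using BL_D(6) b d by auto
  have G0: "G (0, 1/2) = pathstart (snd b)"
    using G(3)[of "1/2"] sb by (simp add: joinpaths_def reversepath_def pathstart_def)
  have G1: "G (1, 1/2) = pathstart (snd d)"
    using G(4)[of "1/2"] sd by (simp add: joinpaths_def reversepath_def pathstart_def)
  have K0: "\<forall>s\<in>{0..1}. K 0 s = (reversepath (fst (B_down n \<phi> a b)) +++ snd (B_down n \<phi> a b)) s"
    unfolding K_def B_down_def fst_conv snd_conv
    by (intro join_cong rev_cong) (simp_all add: hA(5,6) hB(6) A_def A1_def B_def M_def G0)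
  have K1: "\<forall>s\<in>{0..1}. K 1 s = (reversepath (fst (B_down n \<phi> c d)) +++ snd (B_down n \<phi> c d)) s"
    unfolding K_def B_down_def fst_conv snd_conv
    by (intro join_cong rev_cong) (simp_all add: hA(7,8) hB(8) A_def A1_def B_def M_def G1)
  have Kt: "\<forall>t\<in>{0..1}. K t 0 = z0 \<and> K t 1 = z1 \<and> K t (1/2) \<in> nbhd_bdry n \<phi>"
    by (simp add: K_def A_def A1_def B_def reversepath_def joinpaths_def H(5-7) G(6))
  show ?thesis unfolding B_equiv_def
  proof (intro exI[of _ "\<lambda>(t,s). K t s"] conjI)
    show "continuous_on ({0..1}\<times>{0..1}) (\<lambda>(t,s). K t s)" by (rule cK)
    show "(\<lambda>(t,s). K t s) ` ({0..1}\<times>{0..1}) \<subseteq> link_exterior n \<phi>" using KE by auto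
  qed (use K0 K1 Kt in simp_all)
qed


theorem mainTheorem4:
  fixes L :: "(complex \<times> complex) set" and n :: nat
    and \<phi> :: "nat \<Rightarrow> complex \<times> complex \<Rightarrow> complex \<times> complex"
    and \<beta> :: "real^3 \<Rightarrow> complex \<times> complex" and u :: "real^3"
    and z0 z1 :: "complex \<times> complex"
    and a b c d :: "(real \<Rightarrow> complex \<times> complex) \<times> (real \<Rightarrow> complex \<times> complex)"
  assumes link: "oriented_link_nbhd L n \<phi>"
    and ball_cont: "continuous_on (cball 0 1) \<beta>"
    and ball_inj: "inj_on \<beta> (cball 0 1)"
    and ball_S3: "\<beta> ` cball 0 1 \<subseteq> S3"
    and N_in_ball: "nbhd n \<phi> \<subseteq> \<beta> ` ball 0 1"
    and u: "norm u = 1"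
    and z0: "z0 = \<beta> u"
    and z1: "z1 = \<beta> (- u)"
    and a: "a \<in> B_L n \<phi> z0 z1" and b: "b \<in> B_L n \<phi> z0 z1"
    and c: "c \<in> B_L n \<phi> z0 z1" and d: "d \<in> B_L n \<phi> z0 z1"
    and ac: "B_equiv n \<phi> z0 z1 a c"
    and bd: "B_equiv n \<phi> z0 z1 b d"
  shows "B_up n \<phi> a b \<in> B_L n \<phi> z0 z1 \<and> B_down n \<phi> a b \<in> B_L n \<phi> z0 z1 \<and>
         B_equiv n \<phi> z0 z1 (B_up n \<phi> a b) (B_up n \<phi> c d) \<and>
         B_equiv n \<phi> z0 z1 (B_down n \<phi> a b) (B_down n \<phi> c d)"
  using BL_up_down(1)[OF link a b] BL_up_down(2)[OF link a b]
    equiv_up[OF link a b c d ac bd] equiv_down[OF link a b c d ac bd]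
  by (intro conjI)

end
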